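(* Let $n\ge0$ and $\tau\in Y_n$. Then $\tau$ splits if and only if $\tau\in Y^{be}\cup Y^{bo}$. In particular, for $n\ge0$, $$\varphi(Y^{be}_{2n})=\{P\in\mathrm{NCP}_{2n}: P=Q_1\cup Q_2\text{ for some }Q_1,Q_2\in\mathrm{NCP}_n\}.$$
   Context: Planar binary trees: $Y_0=\{|\}$, $Y_n=\{\sigma\vee\tau:\sigma\in Y_k,\tau\in Y_l,k+l=n-1\}$ ($\sigma\vee\tau$: root with left subtree $\sigma$, right subtree $\tau$). The internal vertices of $\tau\in Y_n$ are numbered $1,\dots,n$ in left-to-right order (recursively: vertices of left subtree, root, vertices of right subtree). A right arm of $\tau$ is a class of the equivalence relation on vertices generated by "$x$ is the right child of $y$". $\tau$ splits if every right arm consists of numbers of the same parity. $Y^{be}$ and $Y^{bo}$ are defined jointly recursively by $Y^{be}=\{|\}\cup\{\sigma\vee\rho:\sigma\in Y^{bo},\rho\in Y^{be}\}$ and $Y^{bo}=\{\sigma\vee\rho:\sigma,\rho\in Y^{be}\}$; all trees in $Y^{be}$ have an even number of vertices and those in $Y^{bo}$ an odd number; $Y^{be}_{2n}$ is the set of elements of $Y^{be}$ with $2n$ vertices. $\mathrm{NCP}_n$: noncrossing partitions of $[n]$. For partitions $Q_1,Q_2$ of $[n]$, $Q_1\cup Q_2$ is the partition of $[2n]$ with blocks $\{2i-1:i\in V\}$ ($V\in Q_1$) and $\{2i:i\in W\}$ ($W\in Q_2$). $\varphi:Y\to\mathrm{NCP}$ sends $\tau\in Y_n$ to the partition of $[n]$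 whose blocks are the right arms of $\tau$ (equivalently $\varphi(|)=\emptyset$, $\varphi(\sigma\vee\tau)=\varphi(\sigma)*(|\,\underline*\,\varphi(\tau))$, with $*$ concatenation and $\underline*$ concatenation followed by merging the blocks containing the last elements of each part). *)

theory Defs
  imports Main "HOL-Library.Disjoint_Sets"
begin

text \<open>Planar binary trees: Leaf is the trivial tree |, Node s t is s \<or> t.\<close>
datatype ptree = Leaf | Node ptree ptree

text \<open>Number of internal vertices (tau \<in> Y_n iff tsize tau = n).\<close>
fun tsize :: "ptree \<Rightarrow> nat" where
  "tsize Leaf = 0"
| "tsize (Node s t) = tsize s + 1 + tsize t"

text \<open>Vertices are numbered 1..n in left-to-right (in-order) order: left subtree
  vertices 1..k, root k+1, right subtree vertices shifted by k+1.
  rchild tau is the set of pairs (x,y) with x the right child of y.\<close>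
fun rchild :: "ptree \<Rightarrow> (nat \<times> nat) set" where
  "rchild Leaf = {}"
| "rchild (Node s t) =
     rchild s
     \<union> (\<lambda>(x,y). (x + tsize s + 1, y + tsize s + 1)) ` rchild t
     \<union> (case t of Leaf \<Rightarrow> {}
         | Node t1 t2 \<Rightarrow> {(tsize s + 1 + (tsize t1 + 1), tsize s + 1)})"

definition right_arms :: "ptree \<Rightarrow> nat set set" where
  "right_arms tau = {1..tsize tau} // ((rchild tau \<union> (rchild tau)\<inverse>)\<^sup>*)"

definition phi :: "ptree \<Rightarrow> nat set set" where
  "phi tau = right_arms tau"

definition splits :: "ptree \<Rightarrow> bool" where
  "splits tau \<longleftrightarrow> (\<forall>B \<in> right_arms tau. \<forall>x\<in>B. \<forall>y\<in>B. even x = even y)"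

inductive Ybe :: "ptree \<Rightarrow> bool" and Ybo :: "ptree \<Rightarrow> bool" where
  be_leaf: "Ybe Leaf"
| be_node: "Ybo s \<Longrightarrow> Ybe r \<Longrightarrow> Ybe (Node s r)"
| bo_node: "Ybe s \<Longrightarrow> Ybe r \<Longrightarrow> Ybo (Node s r)"

definition noncrossing :: "nat set set \<Rightarrow> bool" where
  "noncrossing P \<longleftrightarrow> (\<forall>B1\<in>P. \<forall>B2\<in>P. \<forall>a b c d. B1 \<noteq> B2 \<longrightarrow> a < b \<longrightarrow> b < c \<longrightarrow> c < d
      \<longrightarrow> a \<in> B1 \<longrightarrow> c \<in> B1 \<longrightarrow> b \<in> B2 \<longrightarrow> d \<in> B2 \<longrightarrow> False)"

definition NCP :: "nat \<Rightarrow> nat set set set" where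
  "NCP n = {P. partition_on {1..n} P \<and> noncrossing P}"

definition ncp_union :: "nat set set \<Rightarrow> nat set set \<Rightarrow> nat set set" where
  "ncp_union Q1 Q2 = (\<lambda>V. (\<lambda>i. 2*i - 1) ` V) ` Q1 \<union> (\<lambda>W. (\<lambda>i. 2*i) ` W) ` Q2"

end

theory Submission
  imports Defs
begin

fun rootp :: "ptree \<Rightarrow> nat" where
  "rootp Leaf = 0" | "rootp (Node a b) = tsize a + 1"

fun hh :: "ptree \<Rightarrow> nat \<Rightarrow> nat" where
  "hh Leaf x = x"
| "hh (Node s t) x = (if x \<le> tsize s then hh s x else if x = tsize s + 1 then tsize s + 1
     else (if hh t (x - (tsize s + 1)) = rootp t then tsize s + 1 else hh t (x - (tsize s + 1)) + tsize s + 1))"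

lemma hh_bounds: "x \<in> {1..tsize tau} \<Longrightarrow> 1 \<le> hh tau x \<and> hh tau x \<le> x"
proof (induction tau arbitrary: x)
  case Leaf then show ?case by simp
next
  case (Node s t)
  show ?case
  proof (cases "x \<le> tsize s")
    case True then show ?thesis using Node by auto
  next
    case False
    show ?thesis
    proof (cases "x = tsize s + 1")
      case True then show ?thesis using False by auto
    next
      case F2: False
      have "x - (tsize s + 1) \<in> {1..tsize t}" using Node.prems False F2 by auto
      from Node.IH(2)[OF this] show ?thesis using False F2 by auto
    qed
  qed
qed

lemma hh_root: "t \<noteq> Leaf \<Longrightarrow> hh t (rootp t) = rootp t \<and> rootp t \<in> {1..tsize t}"
  by (cases t) auto

lemma hh_max: "t \<noteq> Leaf \<Longrightarrow> hh t (tsize t) = rootp t"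
proof (induction t)
  case Leaf then show ?case by simp
next
  case (Node s t)
  then show ?case by (cases "t = Leaf") auto
qed

definition spl :: "ptree \<Rightarrow> bool" where
  "spl tau \<longleftrightarrow> (\<forall>x\<in>{1..tsize tau}. \<forall>y\<in>{1..tsize tau}. hh tau x = hh tau y \<longrightarrow> even x = even y)"

lemma hh_low: "x \<in> {1..tsize s} \<Longrightarrow> hh (Node s t) x = hh s x" by simp
lemma hh_mid: "hh (Node s t) (tsize s + 1) = tsize s + 1" by simp
lemma hh_high: "x' \<in> {1..tsize t} \<Longrightarrow> hh (Node s t) (x' + tsize s + 1) =
   (if hh t x' = rootp t then tsize s + 1 else hh t x' + tsize s + 1)" by simp

declare hh.simps(2)[simp del]

lemma high_cases: "x \<in> {1..tsize (Node s t)} \<Longrightarrow> x \<in> {1..tsize s} \<or> x = tsize s + 1 \<or> (\<exists>x'\<in>{1..tsize t}. x = x' + tsize s + 1)"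
  by (auto intro!: bexI[of _ "x - tsize s - 1"])

lemma spl_node: "spl (Node s t) \<longleftrightarrow> spl s \<and> spl t \<and> (t \<noteq> Leaf \<longrightarrow> even (rootp t))"
proof
  assume A: "spl (Node s t)"
  have "spl s" unfolding spl_def
  proof (intro ballI impI)
    fix x y assume "x \<in> {1..tsize s}" "y \<in> {1..tsize s}" "hh s x = hh s y"
    then show "even x = even y" using A[unfolded spl_def, rule_format, of x y] hh_low[of x s t] hh_low[of y s t] by auto
  qed
  moreover have "spl t" unfolding spl_def
  proof (intro ballI impI)
    fix x y assume x: "x \<in> {1..tsize t}" and y: "y \<in> {1..tsize t}" and e: "hh t x = hh t y"
    have "even (x + tsize s + 1) = even (y + tsize s + 1)"
      using A[unfolded spl_def, rule_format, of "x + tsize s + 1" "y + tsize s + 1"] x y e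
      hh_high[OF x, of s] hh_high[OF y, of s] by auto
    then show "even x = even y" by auto
  qed
  moreover have "t \<noteq> Leaf \<longrightarrow> even (rootp t)"
  proof
    assume t: "t \<noteq> Leaf"
    note r = hh_root[OF t]
    have "even (rootp t + tsize s + 1) = even (tsize s + 1)"
      using A[unfolded spl_def, rule_format, of "rootp t + tsize s + 1" "tsize s + 1"] r
      hh_high[of "rootp t" t s] hh_mid[of s t] by auto
    then show "even (rootp t)" by auto
  qed
  ultimately show "spl s \<and> spl t \<and> (t \<noteq> Leaf \<longrightarrow> even (rootp t))" by blast
next
  assume A: "spl s \<and> spl t \<and> (t \<noteq> Leaf \<longrightarrow> even (rootp t))"
  let ?k = "tsize s"
  let ?h = "hh (Node s t)"
  have sx: "spl s" "spl t" using A by auto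
  have lowb: "?h (z' + ?k + 1) \<ge> ?k + 1" if "z' \<in> {1..tsize t}" for z'
    using hh_high[OF that, of s] by (simp split: if_splits)
  have lows: "?h z \<le> ?k" if "z \<in> {1..?k}" for z
    using hh_low[OF that, of t] hh_bounds[OF that] that by simp
  have rt: "?h (z' + ?k + 1) = ?k + 1 \<longleftrightarrow> hh t z' = rootp t" if "z' \<in> {1..tsize t}" for z'
    using hh_high[OF that, of s] hh_bounds[OF that] by simp
  have inj: "?h (x' + ?k + 1) = ?h (y' + ?k + 1) \<longleftrightarrow> hh t x' = hh t y'"
    if "x' \<in> {1..tsize t}" "y' \<in> {1..tsize t}" for x' y'
    using hh_high[OF that(1), of s] hh_high[OF that(2), of s] hh_bounds[OF that(1)] hh_bounds[OF that(2)]
    by (simp split: if_splits)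
  have rootc: "even y' = even (rootp t)" if "y' \<in> {1..tsize t}" "hh t y' = rootp t" for y'
  proof -
    have tl: "t \<noteq> Leaf" using that by auto
    have "\<forall>x\<in>{1..tsize t}. \<forall>y\<in>{1..tsize t}. hh t x = hh t y \<longrightarrow> even x = even y"
      using sx(2) unfolding spl_def .
    from this[rule_format, of y' "rootp t"] show ?thesis using hh_root[OF tl] that by simp
  qed
  have evr: "even (rootp t)" if "y' \<in> {1..tsize t}" for y' using A that by auto
  have key: "even x = even y" if x: "x \<in> {1..tsize (Node s t)}" and y: "y \<in> {1..tsize (Node s t)}"
     and e: "?h x = ?h y" for x y
  proof -
    consider (L) "x \<in> {1..?k}" | (M) "x = ?k + 1" | (H) x' where "x' \<in> {1..tsize t}" "x = x' + ?k + 1"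
      using high_cases[OF x] by blast
    then show ?thesis
    proof cases
      case L
      consider (L) "y \<in> {1..?k}" | (M) "y = ?k + 1" | (H) y' where "y' \<in> {1..tsize t}" "y = y' + ?k + 1"
        using high_cases[OF y] by blast
      then show ?thesis
      proof cases
        case L2: L
        have "\<forall>x\<in>{1..tsize s}. \<forall>y\<in>{1..tsize s}. hh s x = hh s y \<longrightarrow> even x = even y"
          using sx(1) unfolding spl_def .
        from this[rule_format, of x y] show ?thesis using L L2 e hh_low[OF L, of t] hh_low[OF L2, of t] by simp
      next
        case M then show ?thesis using e lows[OF L] hh_mid[of s t] by simp
      next
        case H then show ?thesis using e lows[OF L] lowb[OF H(1)] by simp
      qed
    next
      case M
      consider (L) "y \<in> {1..?k}" | (M) "y = ?k + 1" | (H) y' where "y' \<in> {1..tsize t}" "y = y' + ?k + 1"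
        using high_cases[OF y] by blast
      then show ?thesis
      proof cases
        case L then show ?thesis using e lows[OF L] M hh_mid[of s t] by simp
      next
        case M2: M then show ?thesis using M by simp
      next
        case H
        have "hh t y' = rootp t" using rt[OF H(1)] e M H(2) hh_mid[of s t] by simp
        then show ?thesis using rootc[OF H(1)] evr[OF H(1)] M H(2) by simp
      qed
    next
      case H
      consider (L) "y \<in> {1..?k}" | (M) "y = ?k + 1" | (H) y' where "y' \<in> {1..tsize t}" "y = y' + ?k + 1"
        using high_cases[OF y] by blast
      then show ?thesis
      proof cases
        case L then show ?thesis using e lows[OF L] lowb[OF H(1)] H(2) by simp
      next
        case M
        have "hh t x' = rootp t" using rt[OF H(1)] e M H(2) hh_mid[of s t] by simp
        then show ?thesis using rootc[OF H(1)] evr[OF H(1)] M H(2) by simp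
      next
        case H2: H
        have "hh t x' = hh t y'" using inj[OF H(1) H2(1)] e H(2) H2(2) by simp
        have "\<forall>x\<in>{1..tsize t}. \<forall>y\<in>{1..tsize t}. hh t x = hh t y \<longrightarrow> even x = even y"
          using sx(2) unfolding spl_def .
        then have "even x' = even y'" using H(1) H2(1) \<open>hh t x' = hh t y'\<close> by blast
        then show ?thesis using H(2) H2(2) by simp
      qed
    qed
  qed
  then show "spl (Node s t)" unfolding spl_def by blast
qed

inductive_simps Ybe_node: "Ybe (Node s t)"
inductive_simps Ybo_node: "Ybo (Node s t)"
inductive_simps Ybo_leaf: "Ybo Leaf"

lemma Y_parity: "(Ybe t \<longrightarrow> even (tsize t)) \<and> (Ybo t \<longrightarrow> odd (tsize t))"
  by (induction t) (auto simp: Ybe_node Ybo_node Ybo_leaf)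

lemma spl_Y: "(spl t \<longleftrightarrow> Ybe t \<or> Ybo t) \<and> (Ybe t \<longleftrightarrow> (t = Leaf \<or> (spl t \<and> even (rootp t))))"
proof (induction t)
  case Leaf then show ?case by (auto simp: spl_def Ybo_leaf intro: be_leaf)
next
  case (Node s t)
  have p: "Ybo s \<longleftrightarrow> (Ybe s \<or> Ybo s) \<and> odd (tsize s)" using Y_parity[of s] by auto
  have e1: "Ybe (Node s t) \<longleftrightarrow> Ybo s \<and> Ybe t" by (simp add: Ybe_node)
  have e2: "Ybo (Node s t) \<longleftrightarrow> Ybe s \<and> Ybe t" by (simp add: Ybo_node)
  have e3: "spl (Node s t) \<longleftrightarrow> (Ybe s \<or> Ybo s) \<and> Ybe t"
    unfolding spl_node using Node.IH by blast
  have e4: "rootp (Node s t) = tsize s + 1" by simp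
  show ?case using e1 e2 e3 e4 p by auto
qed

lemma rchild_hh: "(x,y) \<in> rchild tau \<Longrightarrow> x \<in> {1..tsize tau} \<and> y \<in> {1..tsize tau} \<and> hh tau x = hh tau y"
proof (induction tau arbitrary: x y)
  case Leaf then show ?case by simp
next
  case (Node s t)
  let ?k = "tsize s"
  have d: "(x,y) \<in> rchild s \<or> (x,y) \<in> (\<lambda>(x,y). (x + ?k + 1, y + ?k + 1)) ` rchild t
     \<or> (x,y) \<in> (case t of Leaf \<Rightarrow> {} | Node t1 t2 \<Rightarrow> {(?k + 1 + (tsize t1 + 1), ?k + 1)})"
    using Node.prems by simp
  consider (S) "(x,y) \<in> rchild s"
    | (T) a b where "(a,b) \<in> rchild t" "x = a + ?k + 1" "y = b + ?k + 1"
    | (R) t1 t2 where "t = Node t1 t2" "x = ?k + 1 + (tsize t1 + 1)" "y = ?k + 1"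
  proof -
    assume a1: "(x,y) \<in> rchild s \<Longrightarrow> thesis"
      and a2: "\<And>a b. (a,b) \<in> rchild t \<Longrightarrow> x = a + ?k + 1 \<Longrightarrow> y = b + ?k + 1 \<Longrightarrow> thesis"
      and a3: "\<And>t1 t2. t = Node t1 t2 \<Longrightarrow> x = ?k + 1 + (tsize t1 + 1) \<Longrightarrow> y = ?k + 1 \<Longrightarrow> thesis"
    from d show thesis
    proof (elim disjE)
      assume "(x,y) \<in> rchild s" then show thesis by (rule a1)
    next
      assume "(x,y) \<in> (\<lambda>(x,y). (x + ?k + 1, y + ?k + 1)) ` rchild t"
      then obtain a b where "(a,b) \<in> rchild t" "(x,y) = (a + ?k + 1, b + ?k + 1)" by auto
      then show thesis using a2 by simp
    next
      assume r: "(x,y) \<in> (case t of Leaf \<Rightarrow> {} | Node t1 t2 \<Rightarrow> {(?k + 1 + (tsize t1 + 1), ?k + 1)})"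
      show thesis
      proof (cases t)
        case Leaf then show thesis using r by simp
      next
        case (Node t1 t2) then show thesis using r a3 by simp
      qed
    qed
  qed
  then show ?case
  proof cases
    case S
    from Node.IH(1)[OF S] show ?thesis using hh_low[of x s t] hh_low[of y s t] by auto
  next
    case T
    from Node.IH(2)[OF T(1)] have ab: "a \<in> {1..tsize t}" "b \<in> {1..tsize t}" "hh t a = hh t b" by auto
    show ?thesis using hh_high[OF ab(1), of s] hh_high[OF ab(2), of s] ab T(2,3) by auto
  next
    case R
    have r: "rootp t = tsize t1 + 1" "t \<noteq> Leaf" using R by auto
    have "hh (Node s t) (rootp t + ?k + 1) = ?k + 1"
      using hh_high[of "rootp t" t s] hh_root[OF r(2)] by simp
    then show ?thesis using R r hh_mid[of s t] by (auto simp: add.commute add.left_commute)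
  qed
qed

lemma rtrancl_map_shift:
  assumes "(a,b) \<in> R\<^sup>*" and "\<And>u v. (u,v) \<in> R \<Longrightarrow> (f u, f v) \<in> S"
  shows "(f a, f b) \<in> S\<^sup>*"
  using assms(1)
proof (induction rule: rtrancl_induct)
  case base then show ?case by simp
next
  case (step y z) then show ?case using assms(2) by (meson rtrancl.rtrancl_into_rtrancl)
qed

lemma hh_path: "x \<in> {1..tsize tau} \<Longrightarrow> (x, hh tau x) \<in> (rchild tau)\<^sup>*"
proof (induction tau arbitrary: x)
  case Leaf then show ?case by simp
next
  case (Node s t)
  let ?k = "tsize s"
  have sub: "rchild s \<subseteq> rchild (Node s t)" by auto
  consider (L) "x \<in> {1..?k}" | (M) "x = ?k + 1" | (H) x' where "x' \<in> {1..tsize t}" "x = x' + ?k + 1"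
    using high_cases[OF Node.prems] by blast
  then show ?case
  proof cases
    case L
    show ?thesis using Node.IH(1)[OF L] rtrancl_mono[OF sub] hh_low[OF L, of t] by auto
  next
    case M then show ?thesis using hh_mid[of s t] by simp
  next
    case H
    have p: "(x' + ?k + 1, hh t x' + ?k + 1) \<in> (rchild (Node s t))\<^sup>*"
      by (rule rtrancl_map_shift[OF Node.IH(2)[OF H(1)], of "\<lambda>u. u + ?k + 1"]) force
    show ?thesis
    proof (cases "hh t x' = rootp t")
      case False
      then show ?thesis using p hh_high[OF H(1), of s] H(2) by simp
    next
      case True
      have tl: "t \<noteq> Leaf" using H by auto
      then obtain t1 t2 where tt: "t = Node t1 t2" by (cases t) auto
      have "(rootp t + ?k + 1, ?k + 1) \<in> rchild (Node s t)" using tt by simp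
      then show ?thesis using p True hh_high[OF H(1), of s] H(2)
        by (metis rtrancl.rtrancl_into_rtrancl)
    qed
  qed
qed

definition fib :: "ptree \<Rightarrow> nat set set" where
  "fib tau = (\<lambda>x. {y\<in>{1..tsize tau}. hh tau y = hh tau x}) ` {1..tsize tau}"

lemma right_arms_fib: "right_arms tau = fib tau"
proof -
  let ?A = "{1..tsize tau}"
  let ?R = "rchild tau \<union> (rchild tau)\<inverse>"
  have cls: "?R\<^sup>* `` {x} = {y\<in>?A. hh tau y = hh tau x}" if x: "x \<in> ?A" for x
  proof
    show "?R\<^sup>* `` {x} \<subseteq> {y\<in>?A. hh tau y = hh tau x}"
    proof
      fix y assume "y \<in> ?R\<^sup>* `` {x}"
      then have "(x,y) \<in> ?R\<^sup>*" by simp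
      then show "y \<in> {y\<in>?A. hh tau y = hh tau x}"
      proof (induction rule: rtrancl_induct)
        case base then show ?case using x by simp
      next
        case (step y z)
        then show ?case using rchild_hh[of y z tau] rchild_hh[of z y tau] by auto
      qed
    qed
  next
    show "{y\<in>?A. hh tau y = hh tau x} \<subseteq> ?R\<^sup>* `` {x}"
    proof
      fix y assume y: "y \<in> {y\<in>?A. hh tau y = hh tau x}"
      have "(x, hh tau x) \<in> ?R\<^sup>*" using hh_path[OF x] rtrancl_mono[of "rchild tau" ?R] by auto
      moreover have "(y, hh tau y) \<in> (rchild tau)\<^sup>*" using hh_path[of y tau] y by auto
      then have "(hh tau y, y) \<in> ((rchild tau)\<inverse>)\<^sup>*" by (rule rtrancl_converseI)
      then have "(hh tau y, y) \<in> ?R\<^sup>*" using rtrancl_mono[of "(rchild tau)\<inverse>" ?R] by auto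
      ultimately show "y \<in> ?R\<^sup>* `` {x}" using y by (auto intro: rtrancl_trans)
    qed
  qed
  show ?thesis unfolding right_arms_def fib_def quotient_def using cls by auto
qed

lemma splits_spl: "splits tau \<longleftrightarrow> spl tau"
proof
  assume a: "splits tau"
  show "spl tau" unfolding spl_def
  proof (intro ballI impI)
    fix x y assume x: "x \<in> {1..tsize tau}" and y: "y \<in> {1..tsize tau}" and e: "hh tau x = hh tau y"
    let ?B = "{z\<in>{1..tsize tau}. hh tau z = hh tau x}"
    have "?B \<in> right_arms tau" unfolding right_arms_fib fib_def using x by blast
    moreover have "x \<in> ?B" "y \<in> ?B" using x y e by auto
    ultimately show "even x = even y" using a[unfolded splits_def, rule_format, of ?B x y] by simp
  qed
next
  assume a: "spl tau"
  show "splits tau" unfolding splits_def right_arms_fib fib_def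
  proof (intro ballI)
    fix B x y assume "B \<in> (\<lambda>x. {y\<in>{1..tsize tau}. hh tau y = hh tau x}) ` {1..tsize tau}" "x \<in> B" "y \<in> B"
    then obtain z where "B = {y\<in>{1..tsize tau}. hh tau y = hh tau z}" "x \<in> B" "y \<in> B" by blast
    then show "even x = even y" using a unfolding spl_def by auto
  qed
qed

lemma hh_nc: "1 \<le> a \<Longrightarrow> a < b \<Longrightarrow> b < c \<Longrightarrow> c < d \<Longrightarrow> d \<le> tsize tau \<Longrightarrow>
   hh tau a = hh tau c \<Longrightarrow> hh tau b = hh tau d \<Longrightarrow> hh tau a = hh tau b"
proof (induction tau arbitrary: a b c d)
  case Leaf then show ?case by simp
next
  case (Node s t)
  let ?k = "tsize s"
  let ?h = "hh (Node s t)"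
  have lowb: "?h z \<ge> ?k + 1" if "z \<in> {?k+1..tsize (Node s t)}" for z
  proof (cases "z = ?k + 1")
    case True then show ?thesis using hh_mid[of s t] by simp
  next
    case False
    have z': "z - ?k - 1 \<in> {1..tsize t}" using that False by auto
    show ?thesis using hh_high[OF z', of s] that False by (simp split: if_splits)
  qed
  have lows: "?h z \<le> ?k" if "z \<in> {1..?k}" for z
    using hh_low[OF that, of t] hh_bounds[OF that] that by simp
  show ?case
  proof (cases "d \<le> ?k")
    case True
    have ins: "a \<in> {1..?k}" "b \<in> {1..?k}" "c \<in> {1..?k}" "d \<in> {1..?k}" using Node.prems True by auto
    note hl = hh_low[OF ins(1), of t] hh_low[OF ins(2), of t] hh_low[OF ins(3), of t] hh_low[OF ins(4), of t]
    have "hh s a = hh s c" "hh s b = hh s d" using Node.prems(6,7) hl by simp_all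
    from Node.IH(1)[OF Node.prems(1-4) True this] show ?thesis using hl by simp
  next
    case dk: False
    show ?thesis
    proof (cases "a \<le> ?k")
      case True
      show ?thesis
      proof (cases "c \<le> ?k")
        case True
        then have "b \<in> {1..?k}" "d \<in> {?k+1..tsize (Node s t)}" using Node.prems dk by auto
        then have "?h b < ?h d" using lows[of b] lowb[of d] by fastforce
        then show ?thesis using Node.prems(7) by simp
      next
        case False
        then have "a \<in> {1..?k}" "c \<in> {?k+1..tsize (Node s t)}" using Node.prems \<open>a \<le> ?k\<close> by auto
        then have "?h a < ?h c" using lows[of a] lowb[of c] by fastforce
        then show ?thesis using Node.prems(6) by simp
      qed
    next
      case ak: False
      define a' where "a' = a - ?k - 1"
      define b' where "b' = b - ?k - 1"
      define c' where "c' = c - ?k - 1"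
      define d' where "d' = d - ?k - 1"
      have bcd: "b' \<in> {1..tsize t}" "c' \<in> {1..tsize t}" "d' \<in> {1..tsize t}" "b' < c'" "c' < d'"
        "b = b' + ?k + 1" "c = c' + ?k + 1" "d = d' + ?k + 1"
        using Node.prems ak unfolding a'_def b'_def c'_def d'_def by auto
      have inj: "?h (x' + ?k + 1) = ?h (y' + ?k + 1) \<longleftrightarrow> hh t x' = hh t y'"
        if "x' \<in> {1..tsize t}" "y' \<in> {1..tsize t}" for x' y'
        using hh_high[OF that(1), of s] hh_high[OF that(2), of s] hh_bounds[OF that(1)] hh_bounds[OF that(2)]
        by (simp split: if_splits)
      have rt: "?h (z' + ?k + 1) = ?k + 1 \<longleftrightarrow> hh t z' = rootp t" if "z' \<in> {1..tsize t}" for z'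
        using hh_high[OF that, of s] hh_bounds[OF that] by simp
      have hbd: "hh t b' = hh t d'" using inj[OF bcd(1) bcd(3)] Node.prems(7) bcd by simp
      show ?thesis
      proof (cases "a = ?k + 1")
        case True
        have tl: "t \<noteq> Leaf" using bcd by auto
        have hc: "hh t c' = rootp t" using rt[OF bcd(2)] Node.prems(6) True hh_mid[of s t] bcd by simp
        have "hh t b' = rootp t"
        proof (cases "d' = tsize t")
          case True then show ?thesis using hbd hh_max[OF tl] by simp
        next
          case False
          then have "d' < tsize t" using bcd by auto
          from Node.IH(2)[OF _ bcd(4) bcd(5) this] bcd hbd hc hh_max[OF tl]
          show ?thesis by simp
        qed
        then show ?thesis using rt[OF bcd(1)] True hh_mid[of s t] bcd by simp
      next
        case False
        have a: "a' \<in> {1..tsize t}" "a' < b'" "a = a' + ?k + 1" using Node.prems ak False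
          unfolding a'_def b'_def by auto
        have hac: "hh t a' = hh t c'" using inj[OF a(1) bcd(2)] Node.prems(6) a bcd by simp
        from Node.IH(2)[of a' b' c' d'] a bcd hac hbd have "hh t a' = hh t b'" by simp
        then show ?thesis using inj[OF a(1) bcd(1)] a bcd by simp
      qed
    qed
  qed
qed

lemma surj_hh:
  fixes e :: "nat \<Rightarrow> nat \<Rightarrow> bool"
  assumes "\<forall>x\<in>{1..m}. e x x"
    and "\<forall>x\<in>{1..m}. \<forall>y\<in>{1..m}. e x y \<longrightarrow> e y x"
    and "\<forall>x\<in>{1..m}. \<forall>y\<in>{1..m}. \<forall>z\<in>{1..m}. e x y \<longrightarrow> e y z \<longrightarrow> e x z"
    and "\<forall>a b c d. 1 \<le> a \<longrightarrow> a < b \<longrightarrow> b < c \<longrightarrow> c < d \<longrightarrow> d \<le> m \<longrightarrow> e a c \<longrightarrow> e b d \<longrightarrow> e a b"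
  shows "\<exists>tau. tsize tau = m \<and> (\<forall>x\<in>{1..m}. \<forall>y\<in>{1..m}. hh tau x = hh tau y \<longleftrightarrow> e x y)"
  using assms
proof (induction m arbitrary: e rule: less_induct)
  case (less m)
  note rf = less.prems(1) and sy = less.prems(2) and tr = less.prems(3) and nc = less.prems(4)
  show ?case
  proof (cases "m = 0")
    case True then show ?thesis by (intro exI[of _ Leaf]) simp
  next
    case m0: False
    define j where "j = (LEAST x. 1 \<le> x \<and> e x m)"
    have ex: "1 \<le> m \<and> e m m" using rf m0 by auto
    have j1: "1 \<le> j \<and> e j m" unfolding j_def by (rule LeastI[of _ m]) (rule ex)
    have jm: "j \<le> m" unfolding j_def by (rule Least_le) (rule ex)
    have jmin: "\<not> e x m" if "1 \<le> x" "x < j" for x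
      using not_less_Least[of x "\<lambda>x. 1 \<le> x \<and> e x m"] that unfolding j_def by blast
    obtain s where s: "tsize s = j - 1" "\<forall>x\<in>{1..j-1}. \<forall>y\<in>{1..j-1}. hh s x = hh s y \<longleftrightarrow> e x y"
    proof -
      have "\<exists>tau. tsize tau = j - 1 \<and> (\<forall>x\<in>{1..j-1}. \<forall>y\<in>{1..j-1}. hh tau x = hh tau y \<longleftrightarrow> e x y)"
      proof (rule less.IH)
        show "j - 1 < m" using jm j1 by auto
        show "\<forall>x\<in>{1..j-1}. e x x" using rf jm by auto
        show "\<forall>x\<in>{1..j-1}. \<forall>y\<in>{1..j-1}. e x y \<longrightarrow> e y x" using sy jm by auto
        show "\<forall>x\<in>{1..j-1}. \<forall>y\<in>{1..j-1}. \<forall>z\<in>{1..j-1}. e x y \<longrightarrow> e y z \<longrightarrow> e x z"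
          using tr jm by (auto 0 0) (meson atLeastAtMost_iff le_trans diff_le_self)
        show "\<forall>a b c d. 1 \<le> a \<longrightarrow> a < b \<longrightarrow> b < c \<longrightarrow> c < d \<longrightarrow> d \<le> j - 1 \<longrightarrow> e a c \<longrightarrow> e b d \<longrightarrow> e a b"
          using nc jm by auto
      qed
      then show ?thesis using that by blast
    qed
    let ?e = "\<lambda>x y. e (x + j) (y + j)"
    obtain t where t: "tsize t = m - j" "\<forall>x\<in>{1..m-j}. \<forall>y\<in>{1..m-j}. hh t x = hh t y \<longleftrightarrow> ?e x y"
    proof -
      have "\<exists>tau. tsize tau = m - j \<and> (\<forall>x\<in>{1..m-j}. \<forall>y\<in>{1..m-j}. hh tau x = hh tau y \<longleftrightarrow> ?e x y)"
      proof (rule less.IH)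
        show "m - j < m" using j1 m0 by auto
        show "\<forall>x\<in>{1..m-j}. ?e x x" using rf jm by auto
        show "\<forall>x\<in>{1..m-j}. \<forall>y\<in>{1..m-j}. ?e x y \<longrightarrow> ?e y x" using sy jm by auto
        show "\<forall>x\<in>{1..m-j}. \<forall>y\<in>{1..m-j}. \<forall>z\<in>{1..m-j}. ?e x y \<longrightarrow> ?e y z \<longrightarrow> ?e x z"
        proof (intro ballI impI)
          fix x y z assume "x\<in>{1..m-j}" "y\<in>{1..m-j}" "z\<in>{1..m-j}" "?e x y" "?e y z"
          then show "?e x z" using tr[rule_format, of "x+j" "y+j" "z+j"] jm by auto
        qed
        show "\<forall>a b c d. 1 \<le> a \<longrightarrow> a < b \<longrightarrow> b < c \<longrightarrow> c < d \<longrightarrow> d \<le> m - j \<longrightarrow> ?e a c \<longrightarrow> ?e b d \<longrightarrow> ?e a b"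
        proof (intro allI impI)
          fix a b c d assume "1 \<le> a" "a < b" "b < c" "c < d" "d \<le> m - j" "?e a c" "?e b d"
          then show "?e a b" using nc[rule_format, of "a+j" "b+j" "c+j" "d+j"] jm by auto
        qed
      qed
      then show ?thesis using that by blast
    qed
    let ?tau = "Node s t"
    let ?h = "hh ?tau"
    have ks: "tsize s + 1 = j" using s(1) j1 by auto
    have sz: "tsize ?tau = m" using s(1) t(1) j1 jm by auto
    have lows: "?h z \<le> j - 1" if "z \<in> {1..j-1}" for z
      using hh_low[of z s t] hh_bounds[of z s] that s(1) by auto
    have mid: "?h j = j" using hh_mid[of s t] ks by simp
    have hi: "?h (z' + j) = (if hh t z' = rootp t then j else hh t z' + j)" if "z' \<in> {1..m-j}" for z'
  proof -
    have z: "z' \<in> {1..tsize t}" using that t(1) by simp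
    have e: "z' + j = z' + tsize s + 1" using ks by simp
    have "?h (z' + j) = ?h (z' + tsize s + 1)" using e by simp
    also have "\<dots> = (if hh t z' = rootp t then tsize s + 1 else hh t z' + tsize s + 1)"
      by (rule hh_high[OF z])
    also have "\<dots> = (if hh t z' = rootp t then j else hh t z' + j)" using ks by simp
    finally show ?thesis .
  qed
    have hib: "1 \<le> hh t z'" if "z' \<in> {1..m-j}" for z' using hh_bounds[of z' t] that t(1) by auto
    have key: "?h x = ?h y \<longleftrightarrow> e x y" if x: "x \<in> {1..m}" and y: "y \<in> {1..m}" and xy: "x \<le> y" for x y
    proof -
      consider (L) "x \<in> {1..j-1}" | (M) "x = j" | (H) x' where "x' \<in> {1..m-j}" "x = x' + j"
      proof -
        assume a1: "x \<in> {1..j-1} \<Longrightarrow> thesis" and a2: "x = j \<Longrightarrow> thesis"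
          and a3: "\<And>x'. x' \<in> {1..m-j} \<Longrightarrow> x = x' + j \<Longrightarrow> thesis"
        show thesis
        proof (cases "x < j")
          case True then show thesis using a1 x by auto
        next
          case False
          show thesis
          proof (cases "x = j")
            case True then show thesis using a2 by simp
          next
            case False
            then show thesis using a3[of "x - j"] \<open>\<not> x < j\<close> x by auto
          qed
        qed
      qed
      then show ?thesis
      proof cases
        case L
        show ?thesis
        proof (cases "y \<le> j - 1")
          case True
          then show ?thesis using s(2) L y hh_low[of x s t] hh_low[of y s t] s(1) by auto
        next
          case False
          then have yj: "j \<le> y" by auto
          have hy: "?h y \<ge> j"
          proof (cases "y = j")
            case True then show ?thesis using mid by simp
          next
            case False
            then have "y - j \<in> {1..m-j}" using yj y by auto
            from hi[OF this] show ?thesis using yj by (simp split: if_splits)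
          qed
          have ne: "\<not> e x y"
          proof
            assume exy: "e x y"
            have x1: "1 \<le> x" "x < j" using L j1 by auto
            have "e x m"
            proof (cases "y = m")
              case True then show ?thesis using exy by simp
            next
              case False
              have exj: "e x j"
              proof (cases "y = j")
                case True then show ?thesis using exy by simp
              next
                case False
                then show ?thesis using nc[rule_format, of x j y m] x1 yj y \<open>y \<noteq> m\<close> exy j1 by auto
              qed
              then show ?thesis using tr[rule_format, of x j m] x1 j1 jm by auto
            qed
            then show False using jmin x1 by simp
          qed
          then show ?thesis using lows[OF L] hy j1 by auto
        qed
      next
        case M
        show ?thesis
        proof (cases "y = j")
          case True then show ?thesis using M rf y by simp
        next
          case False
          then obtain y' where y': "y' \<in> {1..m-j}" "y = y' + j" using M xy y
            by (intro that[of "y - j"]) auto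
          have tl: "t \<noteq> Leaf" using y' t(1) by auto
          have mx: "m - j \<in> {1..m-j}" using y' by auto
          have "?h y = j \<longleftrightarrow> hh t y' = rootp t" using hi[OF y'(1)] hib[OF y'(1)] y' by simp
          also have "\<dots> \<longleftrightarrow> hh t y' = hh t (m - j)" using hh_max[OF tl] t(1) by simp
          also have "\<dots> \<longleftrightarrow> e y m" using t(2) y'(1) mx y'(2) jm by auto
          also have "\<dots> \<longleftrightarrow> e j y"
          proof
            have ins: "j \<in> {1..m}" "m \<in> {1..m}" "y \<in> {1..m}" using j1 jm y m0 by auto
            assume "e y m"
            then have "e m y" using sy ins by blast
            then show "e j y" using tr ins j1 by blast
          next
            have ins: "j \<in> {1..m}" "m \<in> {1..m}" "y \<in> {1..m}" using j1 jm y m0 by auto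
            assume "e j y"
            then have "e y j" using sy ins by blast
            then show "e y m" using tr ins j1 by blast
          qed
          finally show ?thesis using M mid by auto
        qed
      next
        case H
        obtain y' where y': "y' \<in> {1..m-j}" "y = y' + j" using H xy y
          by (intro that[of "y - j"]) auto
        have "?h x = ?h y \<longleftrightarrow> hh t x' = hh t y'"
          using hi[OF H(1)] hi[OF y'(1)] hib[OF H(1)] hib[OF y'(1)] H(2) y'(2)
          by (simp split: if_splits)
        also have "\<dots> \<longleftrightarrow> e x y" using t(2) H y' by auto
        finally show ?thesis .
      qed
    qed
    have "\<forall>x\<in>{1..m}. \<forall>y\<in>{1..m}. ?h x = ?h y \<longleftrightarrow> e x y"
    proof (intro ballI)
      fix x y assume x: "x \<in> {1..m}" and y: "y \<in> {1..m}"
      show "?h x = ?h y \<longleftrightarrow> e x y"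
      proof (cases "x \<le> y")
        case True then show ?thesis using key x y by blast
      next
        case False
        then have "?h y = ?h x \<longleftrightarrow> e y x" using key[OF y x] by simp
        moreover have "e y x \<longleftrightarrow> e x y" using sy x y by blast
        ultimately show ?thesis by auto
      qed
    qed
    then show ?thesis using sz by blast
  qed
qed

lemma fibers_partition: "partition_on A ((\<lambda>x. {y\<in>A. f y = f x}) ` A)"
proof (rule partition_onI)
  show "\<Union> ((\<lambda>x. {y\<in>A. f y = f x}) ` A) = A" by auto
next
  fix p q assume "p \<in> (\<lambda>x. {y\<in>A. f y = f x}) ` A" "q \<in> (\<lambda>x. {y\<in>A. f y = f x}) ` A" "p \<noteq> q"
  then show "disjnt p q" by (auto simp: disjnt_def)
next
  show "{} \<notin> (\<lambda>x. {y\<in>A. f y = f x}) ` A" by auto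
qed

definition pblk :: "nat set set \<Rightarrow> nat \<Rightarrow> nat \<Rightarrow> bool" where
  "pblk P x y \<longleftrightarrow> (\<exists>B\<in>P. x \<in> B \<and> y \<in> B)"

lemma pblk_same: "partition_on A P \<Longrightarrow> B1 \<in> P \<Longrightarrow> B2 \<in> P \<Longrightarrow> x \<in> B1 \<Longrightarrow> x \<in> B2 \<Longrightarrow> B1 = B2"
  unfolding partition_on_def disjoint_def by blast

lemma part_sub:
  assumes P: "partition_on A P" and Q: "partition_on A Q"
     and e: "\<forall>x\<in>A. \<forall>y\<in>A. pblk P x y \<longleftrightarrow> pblk Q x y"
  shows "P \<subseteq> Q"
proof
  fix B assume B: "B \<in> P"
  then obtain x where x: "x \<in> B" using partition_onD3[OF P] by (metis all_not_in_conv)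
  have BA: "B \<subseteq> A" using partition_onD1[OF P] B by auto
  then have xA: "x \<in> A" using x by auto
  then obtain C where C: "C \<in> Q" "x \<in> C" using partition_onD1[OF Q] by auto
  have CA: "C \<subseteq> A" using partition_onD1[OF Q] C by auto
  have "B \<subseteq> C"
  proof
    fix y assume y: "y \<in> B"
    then have "pblk P x y" using B x unfolding pblk_def by blast
    then have "pblk Q x y" using e xA BA y by blast
    then obtain C' where "C' \<in> Q" "x \<in> C'" "y \<in> C'" unfolding pblk_def by blast
    then show "y \<in> C" using pblk_same[OF Q C(1) _ C(2)] by blast
  qed
  moreover have "C \<subseteq> B"
  proof
    fix y assume y: "y \<in> C"
    then have "pblk Q x y" using C unfolding pblk_def by blast
    then have "pblk P x y" using e xA y CA by blast
    then obtain B' where "B' \<in> P" "x \<in> B'" "y \<in> B'" unfolding pblk_def by blast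
    then show "y \<in> B" using pblk_same[OF P B _ x] by blast
  qed
  ultimately show "B \<in> Q" using C by auto
qed

lemma part_eq:
  assumes "partition_on A P" "partition_on A Q" "\<forall>x\<in>A. \<forall>y\<in>A. pblk P x y \<longleftrightarrow> pblk Q x y"
  shows "P = Q"
  using part_sub[OF assms] part_sub[OF assms(2,1)] assms(3) by blast

lemma fib_partition: "partition_on {1..tsize tau} (fib tau)"
  unfolding fib_def by (rule fibers_partition)

lemma pblk_fib: "x \<in> {1..tsize tau} \<Longrightarrow> y \<in> {1..tsize tau} \<Longrightarrow> pblk (fib tau) x y \<longleftrightarrow> hh tau x = hh tau y"
  unfolding pblk_def fib_def by auto

lemma fib_nc: "noncrossing (fib tau)"
  unfolding noncrossing_def
proof (intro ballI allI impI)
  fix B1 B2 a b c d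
  assume B: "B1 \<in> fib tau" "B2 \<in> fib tau" "B1 \<noteq> B2" and o: "a < b" "b < c" "c < d"
    and m: "a \<in> B1" "c \<in> B1" "b \<in> B2" "d \<in> B2"
  obtain z1 where z1: "B1 = {y\<in>{1..tsize tau}. hh tau y = hh tau z1}" using B(1) unfolding fib_def by blast
  obtain z2 where z2: "B2 = {y\<in>{1..tsize tau}. hh tau y = hh tau z2}" using B(2) unfolding fib_def by blast
  have "hh tau a = hh tau c" "hh tau b = hh tau d" "1 \<le> a" "d \<le> tsize tau" using m z1 z2 by auto
  then have "hh tau a = hh tau b" using hh_nc[OF _ o] by blast
  then have "B1 = B2" using z1 z2 m by auto
  then show False using B(3) by simp
qed

lemma fib_NCP: "fib tau \<in> NCP (tsize tau)"
  unfolding NCP_def using fib_partition fib_nc by blast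

definition uniform :: "nat set set \<Rightarrow> bool" where
  "uniform P \<longleftrightarrow> (\<forall>B\<in>P. \<forall>x\<in>B. \<forall>y\<in>B. even x = even y)"

lemma spl_uniform: "spl tau \<longleftrightarrow> uniform (fib tau)"
proof -
  have "uniform (fib tau) \<longleftrightarrow> splits tau" unfolding uniform_def splits_def right_arms_fib by (rule refl)
  then show ?thesis using splits_spl by simp
qed

lemma surj_NCP:
  assumes "P \<in> NCP m"
  shows "\<exists>tau. tsize tau = m \<and> fib tau = P"
proof -
  have P: "partition_on {1..m} P" and nc: "noncrossing P" using assms unfolding NCP_def by auto
  have "\<exists>tau. tsize tau = m \<and> (\<forall>x\<in>{1..m}. \<forall>y\<in>{1..m}. hh tau x = hh tau y \<longleftrightarrow> pblk P x y)"
  proof (rule surj_hh)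
    show "\<forall>x\<in>{1..m}. pblk P x x" using partition_onD1[OF P] unfolding pblk_def by blast
    show "\<forall>x\<in>{1..m}. \<forall>y\<in>{1..m}. pblk P x y \<longrightarrow> pblk P y x" unfolding pblk_def by blast
    show "\<forall>x\<in>{1..m}. \<forall>y\<in>{1..m}. \<forall>z\<in>{1..m}. pblk P x y \<longrightarrow> pblk P y z \<longrightarrow> pblk P x z"
      unfolding pblk_def using pblk_same[OF P] by metis
    show "\<forall>a b c d. 1 \<le> a \<longrightarrow> a < b \<longrightarrow> b < c \<longrightarrow> c < d \<longrightarrow> d \<le> m \<longrightarrow> pblk P a c \<longrightarrow> pblk P b d \<longrightarrow> pblk P a b"
    proof (intro allI impI)
      fix a b c d assume o: "a < b" "b < c" "c < d" and p: "pblk P a c" "pblk P b d"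
      obtain B1 where B1: "B1 \<in> P" "a \<in> B1" "c \<in> B1" using p(1) unfolding pblk_def by blast
      obtain B2 where B2: "B2 \<in> P" "b \<in> B2" "d \<in> B2" using p(2) unfolding pblk_def by blast
      have "B1 = B2" using nc B1 B2 o unfolding noncrossing_def by blast
      then show "pblk P a b" using B1 B2 unfolding pblk_def by blast
    qed
  qed
  then obtain tau where t: "tsize tau = m" "\<forall>x\<in>{1..m}. \<forall>y\<in>{1..m}. hh tau x = hh tau y \<longleftrightarrow> pblk P x y"
    by blast
  have "fib tau = P"
    by (rule part_eq[of "{1..m}"]) (use fib_partition[of tau] t P pblk_fib[of _ tau] in auto)
  then show ?thesis using t by blast
qed

lemma sub_ncp:
  fixes g :: "nat \<Rightarrow> nat"
  assumes P: "P \<in> NCP N" and PS: "PS \<subseteq> P" and sm: "strict_mono g"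
    and rng: "\<And>i. g i \<in> {1..N} \<longleftrightarrow> i \<in> {1..n}"
    and cov: "\<And>i. i \<in> {1..n} \<Longrightarrow> \<exists>B\<in>PS. g i \<in> B"
    and sur: "\<And>B. B \<in> PS \<Longrightarrow> B \<subseteq> g ` {1..n}"
  shows "(\<lambda>B. g -` B) ` PS \<in> NCP n" and "(\<lambda>V. g ` V) ` ((\<lambda>B. g -` B) ` PS) = PS"
proof -
  have Pp: "partition_on {1..N} P" and Pn: "noncrossing P" using P unfolding NCP_def by auto
  have inj: "inj g" using sm by (rule strict_mono_imp_inj_on)
  have img: "g ` (g -` B) = B" if "B \<in> PS" for B using sur[OF that] by auto
  have BN: "B \<subseteq> {1..N}" if "B \<in> PS" for B using partition_onD1[OF Pp] PS that by auto
  show "(\<lambda>V. g ` V) ` ((\<lambda>B. g -` B) ` PS) = PS"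
    unfolding image_image using img by simp
  have neq: "B1 \<noteq> B2" if "B1 \<in> PS" "B2 \<in> PS" "g -` B1 \<noteq> g -` B2" for B1 B2 using that by auto
  have disj: "disjnt B1 B2" if "B1 \<in> PS" "B2 \<in> PS" "B1 \<noteq> B2" for B1 B2
    using partition_onD2[OF Pp] PS that unfolding disjoint_def disjnt_def by blast
  have "partition_on {1..n} ((\<lambda>B. g -` B) ` PS)"
  proof (rule partition_onI)
    show "\<Union> ((\<lambda>B. g -` B) ` PS) = {1..n}"
    proof
      show "\<Union> ((\<lambda>B. g -` B) ` PS) \<subseteq> {1..n}" using BN rng by blast
      show "{1..n} \<subseteq> \<Union> ((\<lambda>B. g -` B) ` PS)" using cov by blast
    qed
  next
    fix p q assume "p \<in> (\<lambda>B. g -` B) ` PS" "q \<in> (\<lambda>B. g -` B) ` PS" "p \<noteq> q"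
    then obtain B1 B2 where "B1 \<in> PS" "B2 \<in> PS" "p = g -` B1" "q = g -` B2" "p \<noteq> q" by blast
    then show "disjnt p q" using disj[of B1 B2] unfolding disjnt_def by auto
  next
    show "{} \<notin> (\<lambda>B. g -` B) ` PS"
    proof
      assume "{} \<in> (\<lambda>B. g -` B) ` PS"
      then obtain B where B: "B \<in> PS" "g -` B = {}" by auto
      have "B \<noteq> {}" using partition_onD3[OF Pp] PS B by auto
      then obtain x where "x \<in> B" by auto
      then obtain i where "g i \<in> B" using sur[OF B(1)] by auto
      then show False using B by auto
    qed
  qed
  moreover have "noncrossing ((\<lambda>B. g -` B) ` PS)"
    unfolding noncrossing_def
  proof (intro ballI allI impI)
    fix V1 V2 a b c d assume V: "V1 \<in> (\<lambda>B. g -` B) ` PS" "V2 \<in> (\<lambda>B. g -` B) ` PS" "V1 \<noteq> V2"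
      and o: "a < b" "b < c" "c < d" and m: "a \<in> V1" "c \<in> V1" "b \<in> V2" "d \<in> V2"
    obtain B1 where B1: "B1 \<in> PS" "V1 = g -` B1" using V(1) by blast
    obtain B2 where B2: "B2 \<in> PS" "V2 = g -` B2" using V(2) by blast
    have "B1 \<noteq> B2" using B1 B2 V(3) by auto
    moreover have "g a < g b" "g b < g c" "g c < g d" using sm o unfolding strict_mono_def by auto
    moreover have "g a \<in> B1" "g c \<in> B1" "g b \<in> B2" "g d \<in> B2" using m B1 B2 by auto
    ultimately show False using Pn B1(1) B2(1) PS unfolding noncrossing_def by blast
  qed
  ultimately show "(\<lambda>B. g -` B) ` PS \<in> NCP n" unfolding NCP_def by blast
qed

lemma decomp:
  assumes P: "P \<in> NCP (2*n)" and u: "uniform P"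
  shows "\<exists>Q1\<in>NCP n. \<exists>Q2\<in>NCP n. P = ncp_union Q1 Q2"
proof -
  have Pp: "partition_on {1..2*n} P" using P unfolding NCP_def by auto
  let ?go = "\<lambda>i::nat. 2*i - 1"
  let ?ge = "\<lambda>i::nat. 2*i"
  let ?Po = "{B\<in>P. \<exists>x\<in>B. odd x}"
  let ?Pe = "{B\<in>P. \<exists>x\<in>B. even x}"
  have U: "\<Union>P = {1..2*n}" using partition_onD1[OF Pp] by simp
  have Bsub: "B \<subseteq> {1..2*n}" if "B \<in> P" for B using partition_onD1[OF Pp] that by auto
  have allodd: "odd y" if "B \<in> ?Po" "y \<in> B" for B y using u that unfolding uniform_def by blast
  have alleven: "even y" if "B \<in> ?Pe" "y \<in> B" for B y using u that unfolding uniform_def by blast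
  have smo: "strict_mono ?go" unfolding strict_mono_def by auto
  have sme: "strict_mono ?ge" unfolding strict_mono_def by auto
  have ro: "?go i \<in> {1..2*n} \<longleftrightarrow> i \<in> {1..n}" for i by auto
  have re: "?ge i \<in> {1..2*n} \<longleftrightarrow> i \<in> {1..n}" for i by auto
  have covo: "\<exists>B\<in>?Po. ?go i \<in> B" if "i \<in> {1..n}" for i
  proof -
    have "?go i \<in> {1..2*n}" using that by auto
    then have "?go i \<in> \<Union>P" unfolding U .
    then obtain B where "B \<in> P" "?go i \<in> B" by blast
    moreover have "odd (?go i)" using that by auto
    ultimately show ?thesis by blast
  qed
  have cove: "\<exists>B\<in>?Pe. ?ge i \<in> B" if "i \<in> {1..n}" for i
  proof -
    have "?ge i \<in> {1..2*n}" using that by auto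
    then have "?ge i \<in> \<Union>P" unfolding U .
    then obtain B where "B \<in> P" "?ge i \<in> B" by blast
    moreover have "even (?ge i)" by auto
    ultimately show ?thesis by blast
  qed
  have suro: "B \<subseteq> ?go ` {1..n}" if B: "B \<in> ?Po" for B
  proof
    fix x assume x: "x \<in> B"
    have "B \<in> P" using B by simp
    then have "odd x" "x \<in> {1..2*n}" using allodd[OF B x] Bsub[of B] x by auto
    then have "x = ?go ((x+1) div 2)" "(x+1) div 2 \<in> {1..n}" by (auto elim!: oddE)
    then show "x \<in> ?go ` {1..n}" by blast
  qed
  have sure: "B \<subseteq> ?ge ` {1..n}" if B: "B \<in> ?Pe" for B
  proof
    fix x assume x: "x \<in> B"
    have "B \<in> P" using B by simp
    then have "even x" "x \<in> {1..2*n}" using alleven[OF B x] Bsub[of B] x by auto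
    then have "x = ?ge (x div 2)" "x div 2 \<in> {1..n}" by (auto elim!: evenE)
    then show "x \<in> ?ge ` {1..n}" by blast
  qed
  note o = sub_ncp[OF P _ smo ro covo suro]
  note e = sub_ncp[OF P _ sme re cove sure]
  have "ncp_union ((\<lambda>B. ?go -` B) ` ?Po) ((\<lambda>B. ?ge -` B) ` ?Pe) = ?Po \<union> ?Pe"
    unfolding ncp_union_def using o(2) e(2) by auto
  also have "\<dots> = P"
  proof
    show "?Po \<union> ?Pe \<subseteq> P" by auto
    show "P \<subseteq> ?Po \<union> ?Pe"
    proof
      fix B assume B: "B \<in> P"
      then have "B \<noteq> {}" using partition_onD3[OF Pp] by auto
      then obtain x where "x \<in> B" by auto
      then show "B \<in> ?Po \<union> ?Pe" using B by (cases "even x") auto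
    qed
  qed
  finally show ?thesis using o(1) e(1) by blast
qed

lemma union_uniform:
  assumes "Q1 \<in> NCP n" "Q2 \<in> NCP n"
  shows "uniform (ncp_union Q1 Q2)"
proof -
  have "V \<subseteq> {1..n}" if "V \<in> Q1" for V using assms(1) that unfolding NCP_def partition_on_def by auto
  moreover have "W \<subseteq> {1..n}" if "W \<in> Q2" for W using assms(2) that unfolding NCP_def partition_on_def by auto
  ultimately show ?thesis unfolding uniform_def ncp_union_def by fastforce
qed

theorem lemma4:
  shows "(\<forall>tau. splits tau \<longleftrightarrow> (Ybe tau \<or> Ybo tau))
       \<and> (\<forall>n::nat. phi ` {tau. Ybe tau \<and> tsize tau = 2*n}
              = {P \<in> NCP (2*n). \<exists>Q1 \<in> NCP n. \<exists>Q2 \<in> NCP n. P = ncp_union Q1 Q2})"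
proof (intro conjI allI)
  fix tau show "splits tau \<longleftrightarrow> (Ybe tau \<or> Ybo tau)" using splits_spl spl_Y by blast
next
  fix n :: nat
  show "phi ` {tau. Ybe tau \<and> tsize tau = 2*n}
              = {P \<in> NCP (2*n). \<exists>Q1 \<in> NCP n. \<exists>Q2 \<in> NCP n. P = ncp_union Q1 Q2}"
  proof
    show "phi ` {tau. Ybe tau \<and> tsize tau = 2*n} \<subseteq> {P \<in> NCP (2*n). \<exists>Q1 \<in> NCP n. \<exists>Q2 \<in> NCP n. P = ncp_union Q1 Q2}"
    proof
      fix P assume "P \<in> phi ` {tau. Ybe tau \<and> tsize tau = 2*n}"
      then obtain tau where t: "Ybe tau" "tsize tau = 2*n" "P = fib tau"
        unfolding phi_def right_arms_fib by blast
      have "P \<in> NCP (2*n)" using fib_NCP[of tau] t by simp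
      moreover have "uniform P" using t spl_Y[of tau] spl_uniform[of tau] by blast
      ultimately show "P \<in> {P \<in> NCP (2*n). \<exists>Q1 \<in> NCP n. \<exists>Q2 \<in> NCP n. P = ncp_union Q1 Q2}"
        using decomp by blast
    qed
  next
    show "{P \<in> NCP (2*n). \<exists>Q1 \<in> NCP n. \<exists>Q2 \<in> NCP n. P = ncp_union Q1 Q2} \<subseteq> phi ` {tau. Ybe tau \<and> tsize tau = 2*n}"
    proof
      fix P assume "P \<in> {P \<in> NCP (2*n). \<exists>Q1 \<in> NCP n. \<exists>Q2 \<in> NCP n. P = ncp_union Q1 Q2}"
      then obtain Q1 Q2 where P: "P \<in> NCP (2*n)" "Q1 \<in> NCP n" "Q2 \<in> NCP n" "P = ncp_union Q1 Q2" by blast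
      have u: "uniform P" using union_uniform[OF P(2,3)] P(4) by simp
      obtain tau where t: "tsize tau = 2*n" "fib tau = P" using surj_NCP[OF P(1)] by blast
      have "spl tau" using spl_uniform[of tau] t u by simp
      then have "Ybe tau \<or> Ybo tau" using spl_Y by blast
      then have "Ybe tau" using Y_parity[of tau] t(1) by auto
      then show "P \<in> phi ` {tau. Ybe tau \<and> tsize tau = 2*n}"
        unfolding phi_def right_arms_fib using t by blast
    qed
  qed
qed

end
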